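(* Consider a sequence (indexed by $n$) of sparse directed stochastic block models with $n$ nodes, $K_n$ communities, community-probability vector $\boldsymbol\rho=(\rho_1,\dots,\rho_{K_n})$ with $\rho_{\min}=\min_k\rho_k>0$, block matrix $\mathbf B\in[0,1]^{K_n\times K_n}$ and sparsity factor $\gamma_n\in(0,1]$, where $\boldsymbol\rho$, $K_n$, $\mathbf B$, $\gamma_n$ may depend on $n$, and assume the following conditions hold: (a) there exist an integer $n_\rho$ and a constant $C_\rho>0$ such that $\rho_{\min}\ge C_\rho\sqrt{\log n/n}$ for all $n\ge n_\rho$; (b) there exist a constant $C_\pi$ with $0<C_\pi<C_\rho$ and a sequence $\eta_n>0$ with $\rho_{\min}>\eta_n\ge C_\pi\sqrt{\log n/n}$, such that $\frac{\frac14 n\eta_n^2}{1+\eta_n}-\log(2K_n)\to\infty$ and $K_n n^{-C_\pi^2/4}\to 0$ as $n\to\infty$. Let $h\in(0,1)$ and let $\tilde{\mathbf P}$ be the neighborhood-smoothing estimator with quantile parameter $h$. Then for any $\epsilon_m>0$, $\epsilon_{AP}>0$ and $\epsilon_\pi>0$ with $\epsilon_\pi\le\rho_{\min}-h$, with probability at least $$1-2K_n\exp\Big(-\frac{\frac14 n\epsilon_\pi^2}{1+\epsilon_\pi}\Big)-2n^2\exp\Big(-\frac{\frac14 n(\epsilon_{AP}-\frac4n)^2}{1+\epsilon_{AP}}\Big)-n(n-1)\exp\Big(-\frac{\frac14 n\epsilon_m^2}{1+\epsilon_m}\Big),$$ it holds that $$\frac1n\|\tilde{\mathbf P}_{i\cdot}-\mathbf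 P_{i\cdot}\|_2^2\le\frac{1}{|N_i|}+\epsilon_m+\frac2n+8\epsilon_{AP}\quad\text{for all } i\in[n].$$
   Context: Model: nodes $[n]=\{1,\dots,n\}$. Labels $Z_1,\dots,Z_n$ are i.i.d. Categorical$(\boldsymbol\rho)$ on $[K_n]$; write $\pi(i)=Z_i$. Conditionally on the labels, the entries $A_{ij}$, $i\ne j$, of the (not necessarily symmetric) adjacency matrix $\mathbf A\in\{0,1\}^{n\times n}$ are independent Bernoulli$(\gamma_nB_{\pi(i)\pi(j)})$, and $A_{ii}=0$. The probability matrix is $\mathbf P\in[0,1]^{n\times n}$ with $P_{ij}=\gamma_nB_{\pi(i)\pi(j)}$ for all $i,j$. $\mathbf M_{i\cdot}$ denotes the $i$-th row of a matrix $\mathbf M$. Estimator: for $i\ne j$, $d(i,j)=\max_{k\in[n]\setminus\{i,j\}}|\langle\mathbf A_{i\cdot}-\mathbf A_{j\cdot},\mathbf A_{k\cdot}\rangle|$. For $h\in(0,1)$, $q_i(h)$ is the empirical $h$-th quantile of the multiset $\{d(i,j):j\ne i\}$ (the smallest value $x$ in this multiset with $|\{j\ne i:d(i,j)\le x\}|\ge h(n-1)$), and $N_i=\{j\in[n]\setminus\{i\}:d(i,j)\le q_i(h)\}$. The estimator is $\tilde P_{ij}=\frac1{|N_i|}\sum_{i'\in N_i}A_{i'j}$. *)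

theory Defs
  imports "HOL-Probability.Probability"
begin

text \<open>Nodes are 1..n, communities are 1..K. The community distribution rho is a pmf on nat.\<close>

definition offdiag :: "nat \<Rightarrow> (nat \<times> nat) set" where
  "offdiag n = {(i, j). i \<in> {1..n} \<and> j \<in> {1..n} \<and> i \<noteq> j}"

text \<open>Joint law of (labels Z, adjacency A): Z_i iid rho; given Z, A_ij (i \<noteq> j) independent
  Bernoulli(gamma * B (Z i) (Z j)); A_ii = False.\<close>
definition sbm_pmf :: "nat \<Rightarrow> nat pmf \<Rightarrow> (nat \<Rightarrow> nat \<Rightarrow> real) \<Rightarrow> real
    \<Rightarrow> ((nat \<Rightarrow> nat) \<times> (nat \<Rightarrow> nat \<Rightarrow> bool)) pmf" where
  "sbm_pmf n rho B gamma =
     do { Z \<leftarrow> Pi_pmf {1..n} 0 (\<lambda>_. rho);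
          F \<leftarrow> Pi_pmf (offdiag n) False (\<lambda>(i, j). bernoulli_pmf (gamma * B (Z i) (Z j)));
          return_pmf (Z, (\<lambda>i j. F (i, j))) }"

definition rho_min :: "nat \<Rightarrow> nat pmf \<Rightarrow> real" where
  "rho_min K rho = Min ((\<lambda>k. pmf rho k) ` {1..K})"

definition adj :: "(nat \<Rightarrow> nat \<Rightarrow> bool) \<Rightarrow> nat \<Rightarrow> nat \<Rightarrow> real" where
  "adj A i j = (if A i j then 1 else 0)"

text \<open>d(i,j) = max over k \<in> [n] - {i,j} of |<A_i - A_j, A_k>| (0 if that index set is empty;
  all values are nonnegative, so inserting 0 does not change the max otherwise).\<close>
definition dNS :: "nat \<Rightarrow> (nat \<Rightarrow> nat \<Rightarrow> bool) \<Rightarrow> nat \<Rightarrow> nat \<Rightarrow> real" where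
  "dNS n A i j = Max (insert 0 ((\<lambda>k. \<bar>\<Sum>l\<in>{1..n}. (adj A i l - adj A j l) * adj A k l\<bar>)
                        ` ({1..n} - {i, j})))"

definition qNS :: "nat \<Rightarrow> (nat \<Rightarrow> nat \<Rightarrow> bool) \<Rightarrow> real \<Rightarrow> nat \<Rightarrow> real" where
  "qNS n A h i = Min {x \<in> (\<lambda>j. dNS n A i j) ` ({1..n} - {i}).
        real (card {j \<in> {1..n} - {i}. dNS n A i j \<le> x}) \<ge> h * (real n - 1)}"

definition NS :: "nat \<Rightarrow> (nat \<Rightarrow> nat \<Rightarrow> bool) \<Rightarrow> real \<Rightarrow> nat \<Rightarrow> nat set" where
  "NS n A h i = {j \<in> {1..n} - {i}. dNS n A i j \<le> qNS n A h i}"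

definition Ptilde :: "nat \<Rightarrow> (nat \<Rightarrow> nat \<Rightarrow> bool) \<Rightarrow> real \<Rightarrow> nat \<Rightarrow> nat \<Rightarrow> real" where
  "Ptilde n A h i j = (1 / real (card (NS n A h i))) * (\<Sum>i'\<in>NS n A h i. adj A i' j)"

end

theory Submission
  imports Defs
begin


lemma prob_bind_le:
  assumes "\<And>x. x \<in> set_pmf p \<Longrightarrow> measure_pmf.prob (f x) A \<le> b"
  shows "measure_pmf.prob (bind_pmf p f) A \<le> b"
proof -
  have "emeasure (measure_pmf (bind_pmf p f)) A = (\<integral>\<^sup>+x. emeasure (measure_pmf (f x)) A \<partial>measure_pmf p)"
    unfolding measure_pmf_bind
    by (subst emeasure_bind[where N="count_space UNIV"]) (auto simp: space_subprob_algebra intro: prob_space_imp_subprob_space measure_pmf.prob_space_axioms)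
  also have "\<dots> \<le> (\<integral>\<^sup>+x. ennreal b \<partial>measure_pmf p)"
    by (intro nn_integral_mono_AE AE_pmfI) (use assms in \<open>auto simp: measure_pmf.emeasure_eq_measure intro: ennreal_leI\<close>)
  also have "\<dots> = ennreal b" by (simp add: measure_pmf.emeasure_space_1)
  finally have *: "ennreal (measure_pmf.prob (bind_pmf p f) A) \<le> ennreal b"
    by (simp add: measure_pmf.emeasure_eq_measure)
  obtain x where "x \<in> set_pmf p" using set_pmf_not_empty[of p] by blast
  hence "b \<ge> 0" using assms[of x] measure_nonneg[of "measure_pmf (f x)" A] by linarith
  thus ?thesis using * by (simp add: ennreal_le_iff)
qed



lemma hoeff_pi:
  fixes L :: "'i set" and q :: "'i \<Rightarrow> real" and c :: "'i \<Rightarrow> bool \<Rightarrow> real"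
  assumes fin: "finite L" and ne: "L \<noteq> {}"
    and q: "\<And>l. l \<in> L \<Longrightarrow> 0 \<le> q l \<and> q l \<le> 1"
    and c: "\<And>l. l \<in> L \<Longrightarrow> \<bar>c l True - c l False\<bar> \<le> 1"
    and t: "t \<ge> 0"
  shows "measure_pmf.prob (Pi_pmf L False (\<lambda>l. bernoulli_pmf (q l)))
           {H. (\<Sum>l\<in>L. c l (H l)) \<ge> (\<Sum>l\<in>L. q l * c l True + (1 - q l) * c l False) + t}
         \<le> exp (-2 * t\<^sup>2 / card L)"
    and "measure_pmf.prob (Pi_pmf L False (\<lambda>l. bernoulli_pmf (q l)))
           {H. (\<Sum>l\<in>L. c l (H l)) \<le> (\<Sum>l\<in>L. q l * c l True + (1 - q l) * c l False) - t}
         \<le> exp (-2 * t\<^sup>2 / card L)"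
proof -
  define M where "M = Pi_pmf L False (\<lambda>l. bernoulli_pmf (q l))"
  define a where "a = (\<lambda>l. min (c l True) (c l False))"
  have E: "measure_pmf.expectation M (\<lambda>H. c l (H l)) = q l * c l True + (1 - q l) * c l False"
    if l: "l \<in> L" for l
  proof -
    have "measure_pmf.expectation M (\<lambda>H. c l (H l)) = measure_pmf.expectation (map_pmf (\<lambda>H. H l) M) (c l)"
      by simp
    also have "map_pmf (\<lambda>H. H l) M = bernoulli_pmf (q l)"
      unfolding M_def using fin l by (subst Pi_pmf_component) auto
    finally show ?thesis using q[OF l] by simp
  qed
  interpret Hoeffding_ineq "measure_pmf M" L "\<lambda>l H. c l (H l)" a "\<lambda>l. a l + 1"
    "\<Sum>l\<in>L. q l * c l True + (1 - q l) * c l False"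
  proof unfold_locales
    show "finite L" by fact
    show "prob_space.indep_vars (measure_pmf M) (\<lambda>_. borel) (\<lambda>l H. c l (H l)) L"
      unfolding M_def
      by (intro prob_space.indep_vars_compose2[OF _ indep_vars_Pi_pmf[OF fin]])
         (auto simp: measure_pmf.prob_space_axioms)
    show "AE x in measure_pmf M. c i (x i) \<in> {a i..a i + 1}" if "i \<in> L" for i
    proof (intro AE_pmfI)
      fix x assume "x \<in> set_pmf M"
      show "c i (x i) \<in> {a i..a i + 1}" using c[OF that] by (cases "x i") (auto simp: a_def)
    qed
    show "(\<Sum>l\<in>L. q l * c l True + (1 - q l) * c l False) \<equiv> \<Sum>i\<in>L. measure_pmf.expectation M (\<lambda>H. c i (H i))"
      using E by (simp cong: sum.cong)
  qed
  have cs: "(\<Sum>i\<in>L. (a i + 1 - a i)\<^sup>2) = real (card L)" by simp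
  have pos: "(\<Sum>i\<in>L. (a i + 1 - a i)\<^sup>2) > 0" using fin ne by (simp add: card_gt_0_iff)
  show "measure_pmf.prob (Pi_pmf L False (\<lambda>l. bernoulli_pmf (q l)))
           {H. (\<Sum>l\<in>L. c l (H l)) \<ge> (\<Sum>l\<in>L. q l * c l True + (1 - q l) * c l False) + t}
         \<le> exp (-2 * t\<^sup>2 / card L)"
    using Hoeffding_ineq_ge[OF t pos] unfolding cs by (simp add: M_def)
  show "measure_pmf.prob (Pi_pmf L False (\<lambda>l. bernoulli_pmf (q l)))
           {H. (\<Sum>l\<in>L. c l (H l)) \<le> (\<Sum>l\<in>L. q l * c l True + (1 - q l) * c l False) - t}
         \<le> exp (-2 * t\<^sup>2 / card L)"
    using Hoeffding_ineq_le[OF t pos] unfolding cs by (simp add: M_def)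
qed



lemma cond_pi:
  assumes fin: "finite I" and sub: "L \<subseteq> I"
    and b: "\<And>G. measure_pmf.prob (Pi_pmf L d p) {H. (\<lambda>x. if x \<in> I - L then G x else H x) \<in> S} \<le> b"
  shows "measure_pmf.prob (Pi_pmf I d p) S \<le> b"
proof -
  have finL: "finite L" using fin sub finite_subset by blast
  have IU: "I = (I - L) \<union> L" using sub by blast
  have "Pi_pmf I d p = map_pmf (\<lambda>(f,g) x. if x \<in> I - L then f x else g x)
             (pair_pmf (Pi_pmf (I - L) d p) (Pi_pmf L d p))"
    by (subst IU, rule Pi_pmf_union) (use fin finL in auto)
  also have "\<dots> = bind_pmf (Pi_pmf (I - L) d p) (\<lambda>G. map_pmf (\<lambda>H x. if x \<in> I - L then G x else H x) (Pi_pmf L d p))"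
    by (simp add: pair_pmf_def map_bind_pmf bind_map_pmf map_pmf_def bind_assoc_pmf bind_return_pmf)
  finally have eq: "Pi_pmf I d p = \<dots>" .
  show ?thesis unfolding eq
  proof (rule prob_bind_le)
    fix G
    show "measure_pmf.prob (map_pmf (\<lambda>H x. if x \<in> I - L then G x else H x) (Pi_pmf L d p)) S \<le> b"
      unfolding measure_map_pmf vimage_def by (rule b)
  qed
qed

lemma cond_hoeff:
  fixes I L :: "'i set" and q :: "'i \<Rightarrow> real" and c :: "('i \<Rightarrow> bool) \<Rightarrow> 'i \<Rightarrow> bool \<Rightarrow> real"
  assumes fin: "finite I" and sub: "L \<subseteq> I" and ne: "L \<noteq> {}"
    and q: "\<And>l. l \<in> L \<Longrightarrow> 0 \<le> q l \<and> q l \<le> 1"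
    and dep: "\<And>F F'. (\<And>x. x \<in> I - L \<Longrightarrow> F x = F' x) \<Longrightarrow> c F = c F'"
    and c: "\<And>F l. l \<in> L \<Longrightarrow> \<bar>c F l True - c F l False\<bar> \<le> 1"
    and t: "t \<ge> 0"
  shows "measure_pmf.prob (Pi_pmf I False (\<lambda>l. bernoulli_pmf (q l)))
           {F. (\<Sum>l\<in>L. c F l (F l)) \<ge> (\<Sum>l\<in>L. q l * c F l True + (1 - q l) * c F l False) + t}
         \<le> exp (-2 * t\<^sup>2 / card L)" (is ?A)
    and "measure_pmf.prob (Pi_pmf I False (\<lambda>l. bernoulli_pmf (q l)))
           {F. (\<Sum>l\<in>L. c F l (F l)) \<le> (\<Sum>l\<in>L. q l * c F l True + (1 - q l) * c F l False) - t}
         \<le> exp (-2 * t\<^sup>2 / card L)" (is ?B)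
proof -
  have finL: "finite L" using fin sub finite_subset by blast
  define mg where "mg = (\<lambda>G H x. if x \<in> I - L then G x else (H x::bool))"
  define c0 where "c0 = (\<lambda>G. c (mg G (\<lambda>_. False)))"
  have cm: "c (mg G H) = c0 G" for G H
    unfolding c0_def by (rule dep) (auto simp: mg_def)
  have cb: "\<And>G l. l \<in> L \<Longrightarrow> \<bar>c0 G l True - c0 G l False\<bar> \<le> 1"
    unfolding c0_def by (rule c)
  have mgL: "l \<in> L \<Longrightarrow> mg G H l = H l" for G H l by (auto simp: mg_def)
  show ?A
  proof (rule cond_pi[OF fin sub])
    fix G
    let ?c = "c0 G"
    have "{H. mg G H \<in> {F. (\<Sum>l\<in>L. c F l (F l)) \<ge> (\<Sum>l\<in>L. q l * c F l True + (1 - q l) * c F l False) + t}}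
        = {H. (\<Sum>l\<in>L. ?c l (H l)) \<ge> (\<Sum>l\<in>L. q l * ?c l True + (1 - q l) * ?c l False) + t}"
      using mgL by (simp add: cm cong: sum.cong)
    also have "measure_pmf.prob (Pi_pmf L False (\<lambda>l. bernoulli_pmf (q l))) \<dots> \<le> exp (-2 * t\<^sup>2 / card L)"
      by (rule hoeff_pi(1)[OF finL ne q cb t])
    finally show "measure_pmf.prob (Pi_pmf L False (\<lambda>l. bernoulli_pmf (q l)))
       {H. (\<lambda>x. if x \<in> I - L then G x else H x) \<in> {F. (\<Sum>l\<in>L. c F l (F l)) \<ge> (\<Sum>l\<in>L. q l * c F l True + (1 - q l) * c F l False) + t}}
       \<le> exp (-2 * t\<^sup>2 / card L)" unfolding mg_def .
  qed
  show ?B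
  proof (rule cond_pi[OF fin sub])
    fix G
    let ?c = "c0 G"
    have "{H. mg G H \<in> {F. (\<Sum>l\<in>L. c F l (F l)) \<le> (\<Sum>l\<in>L. q l * c F l True + (1 - q l) * c F l False) - t}}
        = {H. (\<Sum>l\<in>L. ?c l (H l)) \<le> (\<Sum>l\<in>L. q l * ?c l True + (1 - q l) * ?c l False) - t}"
      using mgL by (simp add: cm cong: sum.cong)
    also have "measure_pmf.prob (Pi_pmf L False (\<lambda>l. bernoulli_pmf (q l))) \<dots> \<le> exp (-2 * t\<^sup>2 / card L)"
      by (rule hoeff_pi(2)[OF finL ne q cb t])
    finally show "measure_pmf.prob (Pi_pmf L False (\<lambda>l. bernoulli_pmf (q l)))
       {H. (\<lambda>x. if x \<in> I - L then G x else H x) \<in> {F. (\<Sum>l\<in>L. c F l (F l)) \<le> (\<Sum>l\<in>L. q l * c F l True + (1 - q l) * c F l False) - t}}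
       \<le> exp (-2 * t\<^sup>2 / card L)" unfolding mg_def .
  qed
qed



lemma adj01: "0 \<le> adj A i j \<and> adj A i j \<le> 1" by (simp add: adj_def)

lemma dNS_le:
  assumes "T \<ge> 0" "\<And>k. k \<in> {1..n} - {i, j} \<Longrightarrow> \<bar>\<Sum>l\<in>{1..n}. (adj A i l - adj A j l) * adj A k l\<bar> \<le> T"
  shows "dNS n A i j \<le> T"
  unfolding dNS_def using assms by (subst Max_le_iff) auto

lemma dNS_ge:
  assumes "k \<in> {1..n} - {i, j}"
  shows "\<bar>\<Sum>l\<in>{1..n}. (adj A i l - adj A j l) * adj A k l\<bar> \<le> dNS n A i j"
  unfolding dNS_def using assms by (intro Max_ge) auto

lemma qNS_props:
  assumes S: "S \<subseteq> {1..n} - {i}" "S \<noteq> {}" "real (card S) \<ge> h * (real n - 1)"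
    and T: "\<And>j. j \<in> S \<Longrightarrow> dNS n A i j \<le> T"
  shows "qNS n A h i \<le> T" "NS n A h i \<noteq> {}"
proof -
  define Q where "Q = {x \<in> (\<lambda>j. dNS n A i j) ` ({1..n} - {i}).
        real (card {j \<in> {1..n} - {i}. dNS n A i j \<le> x}) \<ge> h * (real n - 1)}"
  have finS: "finite S" using S(1) finite_subset by blast
  define x where "x = Max ((\<lambda>j. dNS n A i j) ` S)"
  have xin: "x \<in> (\<lambda>j. dNS n A i j) ` S" unfolding x_def using finS S(2) by (intro Max_in) auto
  have xT: "x \<le> T" unfolding x_def using finS S(2) T by (subst Max_le_iff) auto
  have "S \<subseteq> {j \<in> {1..n} - {i}. dNS n A i j \<le> x}"
    using S(1) finS unfolding x_def by auto
  hence "card S \<le> card {j \<in> {1..n} - {i}. dNS n A i j \<le> x}" by (intro card_mono) auto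
  hence "x \<in> Q" unfolding Q_def using xin S by auto
  have finQ: "finite Q" unfolding Q_def by auto
  have q: "qNS n A h i = Min Q" unfolding qNS_def Q_def ..
  show "qNS n A h i \<le> T" using Min_le[OF finQ \<open>x \<in> Q\<close>] xT q by linarith
  have "Min Q \<in> Q" using finQ \<open>x \<in> Q\<close> by (intro Min_in) auto
  hence "Min Q \<in> (\<lambda>j. dNS n A i j) ` ({1..n} - {i})" unfolding Q_def by blast
  then obtain j where "j \<in> {1..n} - {i}" "Min Q = dNS n A i j" by blast
  hence "j \<in> NS n A h i" unfolding NS_def q by auto
  thus "NS n A h i \<noteq> {}" by auto
qed



lemma det:
  fixes n :: nat and A :: "nat \<Rightarrow> nat \<Rightarrow> bool" and Z :: "nat \<Rightarrow> nat" and P :: "nat \<Rightarrow> nat \<Rightarrow> real" and \<delta> \<epsilon> h :: real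
  assumes n3: "n \<ge> 3" and h: "0 < h" and dl: "\<delta> \<ge> 0" and ep: "\<epsilon> \<ge> 0"
   and P01: "\<And>i l. 0 \<le> P i l \<and> P i l \<le> 1"
   and Prow: "\<And>i j l. Z i = Z j \<Longrightarrow> P i l = P j l"
   and comm: "\<And>i. i \<in> {1..n} \<Longrightarrow> real (card {j\<in>{1..n}. Z j = Z i}) \<ge> h * (real n - 1) + 1"
   and E1: "\<And>i k. i\<in>{1..n} \<Longrightarrow> k\<in>{1..n} \<Longrightarrow> i \<noteq> k \<Longrightarrow>
              \<bar>\<Sum>l\<in>{1..n}. (adj A i l - P i l) * adj A k l\<bar> \<le> \<delta>/2 * n"
   and E2: "\<And>x k. x\<in>{1..n} \<Longrightarrow> k\<in>{1..n} \<Longrightarrow>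
              \<bar>\<Sum>l\<in>{1..n}. P x l * (adj A k l - P k l)\<bar> \<le> \<delta>/2 * n"
   and E3: "\<And>i k. i\<in>{1..n} \<Longrightarrow> k\<in>{1..n} \<Longrightarrow> i \<noteq> k \<Longrightarrow>
              (\<Sum>l\<in>{1..n}. (adj A i l - P i l) * (adj A k l - P k l)) \<le> \<epsilon> * n"
   and i: "i \<in> {1..n}"
  shows "1 / real n * (\<Sum>j\<in>{1..n}. (Ptilde n A h i j - P i j)\<^sup>2)
           \<le> 1 / real (card (NS n A h i)) + \<epsilon> + 8 * \<delta>"
proof -
  let ?a = "adj A"
  let ?I = "{1..n}"
  define S where "S = (\<lambda>x. {j\<in>?I. Z j = Z x} - {x})"
  have Scard: "real (card (S x)) \<ge> h * (real n - 1)" if "x \<in> ?I" for x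
  proof -
    have "card (S x) = card {j\<in>?I. Z j = Z x} - 1" unfolding S_def using that by (subst card_Diff_singleton) auto
    thus ?thesis using comm[OF that] by (cases "card {j\<in>?I. Z j = Z x}") auto
  qed
  have Sne: "S x \<noteq> {}" if "x \<in> ?I" for x
  proof -
    have "h * (real n - 1) > 0" using h n3 by auto
    thus ?thesis using Scard[OF that] by (auto)
  qed
  have Ssub: "S x \<subseteq> ?I - {x}" for x unfolding S_def by auto
  have dsame: "dNS n A i j \<le> \<delta> * n" if j: "j \<in> S i" for j
  proof (rule dNS_le)
    show "0 \<le> \<delta> * real n" using dl by simp
    fix k assume k: "k \<in> ?I - {i, j}"
    have jI: "j \<in> ?I" "j \<noteq> i" "Z j = Z i" using j unfolding S_def by auto
    have "(\<Sum>l\<in>?I. (?a i l - ?a j l) * ?a k l) =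
          (\<Sum>l\<in>?I. (?a i l - P i l) * ?a k l) - (\<Sum>l\<in>?I. (?a j l - P j l) * ?a k l)"
      unfolding sum_subtractf[symmetric] using Prow[OF jI(3)] by (intro sum.cong) (auto simp: algebra_simps)
    thus "\<bar>\<Sum>l\<in>?I. (?a i l - ?a j l) * ?a k l\<bar> \<le> \<delta> * n"
      using E1[OF i, of k] E1[OF jI(1), of k] k by auto
  qed
  define N where "N = NS n A h i"
  have q: "qNS n A h i \<le> \<delta> * n" and Nne: "N \<noteq> {}"
    using qNS_props[OF Ssub Sne[OF i] Scard[OF i] dsame] i unfolding N_def by auto
  have Nsub: "N \<subseteq> ?I - {i}" unfolding N_def NS_def by auto
  have finN: "finite N" using Nsub finite_subset by blast
  have dN: "\<bar>\<Sum>l\<in>?I. (?a i l - ?a i' l) * ?a k l\<bar> \<le> \<delta> * n" if "i' \<in> N" "k \<in> ?I - {i, i'}" for i' k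
  proof -
    have "dNS n A i i' \<le> qNS n A h i" using that unfolding N_def NS_def by auto
    thus ?thesis using dNS_ge[OF that(2), of A] q by linarith
  qed
  have bias: "(\<Sum>l\<in>?I. (P i' l - P i l)\<^sup>2) \<le> 6 * \<delta> * n" if i': "i' \<in> N" for i'
  proof (cases "Z i' = Z i")
    case True
    thus ?thesis using Prow[OF True] dl by simp
  next
    case False
    have i'I: "i' \<in> ?I" "i' \<noteq> i" using i' Nsub by auto
    have key: "\<bar>\<Sum>l\<in>?I. (P i l - P i' l) * P k l\<bar> \<le> 3 * \<delta> * n" if k: "k \<in> ?I - {i, i'}" for k
    proof -
      have "(\<Sum>l\<in>?I. (P i l - P i' l) * P k l) =
         (\<Sum>l\<in>?I. (?a i l - ?a i' l) * ?a k l - (?a i l - P i l) * ?a k l + (?a i' l - P i' l) * ?a k l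
             - P i l * (?a k l - P k l) + P i' l * (?a k l - P k l))"
        by (intro sum.cong) (auto simp: algebra_simps)
      also have "\<dots> = (\<Sum>l\<in>?I. (?a i l - ?a i' l) * ?a k l) - (\<Sum>l\<in>?I. (?a i l - P i l) * ?a k l)
          + (\<Sum>l\<in>?I. (?a i' l - P i' l) * ?a k l) - (\<Sum>l\<in>?I. P i l * (?a k l - P k l))
          + (\<Sum>l\<in>?I. P i' l * (?a k l - P k l))"
        by (simp add: sum.distrib sum_subtractf)
      finally have eq: "(\<Sum>l\<in>?I. (P i l - P i' l) * P k l) = \<dots>" .
      have "\<bar>\<Sum>l\<in>?I. (?a i l - ?a i' l) * ?a k l\<bar> \<le> \<delta> * n" using dN[OF i' k] .
      moreover have "\<bar>\<Sum>l\<in>?I. (?a i l - P i l) * ?a k l\<bar> \<le> \<delta>/2 * n" using E1[OF i, of k] k by auto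
      moreover have "\<bar>\<Sum>l\<in>?I. (?a i' l - P i' l) * ?a k l\<bar> \<le> \<delta>/2 * n" using E1[OF i'I(1), of k] k by auto
      moreover have "\<bar>\<Sum>l\<in>?I. P i l * (?a k l - P k l)\<bar> \<le> \<delta>/2 * n" using E2[OF i, of k] k by auto
      moreover have "\<bar>\<Sum>l\<in>?I. P i' l * (?a k l - P k l)\<bar> \<le> \<delta>/2 * n" using E2[OF i'I(1), of k] k by auto
      ultimately show ?thesis unfolding eq by linarith
    qed
    obtain k where k: "k \<in> S i" using Sne[OF i] by auto
    obtain k' where k': "k' \<in> S i'" using Sne[OF i'I(1)] by auto
    have kk: "k \<in> ?I - {i, i'}" "Z k = Z i" using k False unfolding S_def by auto
    have kk': "k' \<in> ?I - {i, i'}" "Z k' = Z i'" using k' False unfolding S_def by auto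
    have "(\<Sum>l\<in>?I. (P i' l - P i l)\<^sup>2) = (\<Sum>l\<in>?I. (P i l - P i' l) * P k l) - (\<Sum>l\<in>?I. (P i l - P i' l) * P k' l)"
      unfolding sum_subtractf[symmetric] using Prow[OF kk(2)] Prow[OF kk'(2)]
      by (intro sum.cong) (auto simp: algebra_simps power2_eq_square)
    thus ?thesis using key[OF kk(1)] key[OF kk'(1)] by linarith
  qed
  define D where "D = (\<lambda>u v. \<Sum>j\<in>?I. (?a u j - P i j) * (?a v j - P i j))"
  have Ddiag: "D u u \<le> n" for u
  proof -
    have "D u u \<le> (\<Sum>j\<in>?I. 1)" unfolding D_def
    proof (intro sum_mono)
      fix j
      have "\<bar>?a u j - P i j\<bar> \<le> 1" using adj01[of A u j] P01[of i j] by auto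
      hence "\<bar>?a u j - P i j\<bar> * \<bar>?a u j - P i j\<bar> \<le> 1" by (intro mult_le_one) auto
      thus "(?a u j - P i j) * (?a u j - P i j) \<le> 1" by (simp add: abs_mult_self_eq)
    qed
    thus ?thesis by simp
  qed
  have Doff: "D u v \<le> (\<epsilon> + 8 * \<delta>) * n" if u: "u \<in> N" and v: "v \<in> N" and uv: "u \<noteq> v" for u v
  proof -
    have uI: "u \<in> ?I" and vI: "v \<in> ?I" using u v Nsub by auto
    have "D u v = (\<Sum>j\<in>?I. (?a u j - P u j) * (?a v j - P v j)
       + (P v j * (?a u j - P u j) - P i j * (?a u j - P u j))
       + (P u j * (?a v j - P v j) - P i j * (?a v j - P v j))
       + (P u j - P i j) * (P v j - P i j))"
      unfolding D_def by (intro sum.cong refl) (simp add: algebra_simps)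
    also have "\<dots> = (\<Sum>j\<in>?I. (?a u j - P u j) * (?a v j - P v j))
       + ((\<Sum>j\<in>?I. P v j * (?a u j - P u j)) - (\<Sum>j\<in>?I. P i j * (?a u j - P u j)))
       + ((\<Sum>j\<in>?I. P u j * (?a v j - P v j)) - (\<Sum>j\<in>?I. P i j * (?a v j - P v j)))
       + (\<Sum>j\<in>?I. (P u j - P i j) * (P v j - P i j))"
      by (simp only: sum.distrib sum_subtractf)
    finally have "D u v = \<dots>" .
    moreover have "(\<Sum>j\<in>?I. (?a u j - P u j) * (?a v j - P v j)) \<le> \<epsilon> * n" using E3[OF uI vI uv] .
    moreover have "\<bar>\<Sum>j\<in>?I. P v j * (?a u j - P u j)\<bar> \<le> \<delta>/2 * n" using E2[OF vI uI] .
    moreover have "\<bar>\<Sum>j\<in>?I. P i j * (?a u j - P u j)\<bar> \<le> \<delta>/2 * n" using E2[OF i uI] .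
    moreover have "\<bar>\<Sum>j\<in>?I. P u j * (?a v j - P v j)\<bar> \<le> \<delta>/2 * n" using E2[OF uI vI] .
    moreover have "\<bar>\<Sum>j\<in>?I. P i j * (?a v j - P v j)\<bar> \<le> \<delta>/2 * n" using E2[OF i vI] .
    moreover have "(\<Sum>j\<in>?I. (P u j - P i j) * (P v j - P i j)) \<le> 6 * \<delta> * n"
    proof -
      have "(\<Sum>j\<in>?I. (P u j - P i j) * (P v j - P i j))
           \<le> (\<Sum>j\<in>?I. ((P u j - P i j)\<^sup>2 + (P v j - P i j)\<^sup>2) / 2)"
      proof (intro sum_mono)
        fix j
        have "0 \<le> ((P u j - P i j) - (P v j - P i j))\<^sup>2" by simp
        thus "(P u j - P i j) * (P v j - P i j) \<le> ((P u j - P i j)\<^sup>2 + (P v j - P i j)\<^sup>2) / 2"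
          by (simp add: power2_eq_square algebra_simps)
      qed
      also have "\<dots> = ((\<Sum>j\<in>?I. (P u j - P i j)\<^sup>2) + (\<Sum>j\<in>?I. (P v j - P i j)\<^sup>2)) / 2"
        by (simp add: sum.distrib[symmetric] sum_divide_distrib[symmetric])
      also have "\<dots> \<le> 6 * \<delta> * n" using bias[OF u] bias[OF v] by (simp add: field_simps)
      finally show ?thesis .
    qed
    ultimately show ?thesis by (simp add: algebra_simps)
  qed
  define m where "m = card N"
  have m0: "m > 0" unfolding m_def using finN Nne by (simp add: card_gt_0_iff)
  have n0: "real n > 0" using n3 by simp
  have Pt: "Ptilde n A h i j - P i j = (1 / m) * (\<Sum>u\<in>N. (?a u j - P i j))" for j
    unfolding Ptilde_def N_def[symmetric] using m0
    by (simp add: m_def sum_subtractf field_simps)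
  have "(\<Sum>j\<in>?I. (Ptilde n A h i j - P i j)\<^sup>2) = (\<Sum>j\<in>?I. (1 / m)\<^sup>2 * (\<Sum>u\<in>N. \<Sum>v\<in>N. (?a u j - P i j) * (?a v j - P i j)))"
    unfolding Pt power_mult_distrib by (simp add: power2_eq_square sum_product)
  also have "\<dots> = (1 / m)\<^sup>2 * (\<Sum>j\<in>?I. \<Sum>u\<in>N. \<Sum>v\<in>N. (?a u j - P i j) * (?a v j - P i j))"
    by (simp add: sum_distrib_left)
  also have "(\<Sum>j\<in>?I. \<Sum>u\<in>N. \<Sum>v\<in>N. (?a u j - P i j) * (?a v j - P i j))
      = (\<Sum>u\<in>N. \<Sum>j\<in>?I. \<Sum>v\<in>N. (?a u j - P i j) * (?a v j - P i j))" by (rule sum.swap)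
  also have "\<dots> = (\<Sum>u\<in>N. \<Sum>v\<in>N. D u v)" unfolding D_def by (intro sum.cong refl sum.swap)
  finally have eqL: "(\<Sum>j\<in>?I. (Ptilde n A h i j - P i j)\<^sup>2) = (1 / m)\<^sup>2 * (\<Sum>u\<in>N. \<Sum>v\<in>N. D u v)" .
  have inner: "(\<Sum>v\<in>N. D u v) \<le> n + (m - 1) * ((\<epsilon> + 8 * \<delta>) * n)" if u: "u \<in> N" for u
  proof -
    have "(\<Sum>v\<in>N. D u v) = D u u + (\<Sum>v\<in>N - {u}. D u v)" using finN u by (subst sum.remove) auto
    also have "(\<Sum>v\<in>N - {u}. D u v) \<le> (\<Sum>v\<in>N - {u}. (\<epsilon> + 8 * \<delta>) * n)"
      by (intro sum_mono Doff[OF u]) auto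
    also have "\<dots> = (m - 1) * ((\<epsilon> + 8 * \<delta>) * n)" using finN u m0 by (simp add: m_def of_nat_diff)
    finally show ?thesis using Ddiag[of u] by linarith
  qed
  have "(\<Sum>u\<in>N. \<Sum>v\<in>N. D u v) \<le> (\<Sum>u\<in>N. n + (m - 1) * ((\<epsilon> + 8 * \<delta>) * n))"
    by (intro sum_mono inner)
  also have "\<dots> = m * (n + (m - 1) * ((\<epsilon> + 8 * \<delta>) * n))" by (simp add: m_def)
  finally have tot: "(\<Sum>u\<in>N. \<Sum>v\<in>N. D u v) \<le> m * (n + (m - 1) * ((\<epsilon> + 8 * \<delta>) * n))" .
  have "1 / real n * (\<Sum>j\<in>?I. (Ptilde n A h i j - P i j)\<^sup>2) \<le> 1 / real n * ((1/m)\<^sup>2 * (m * (n + (m - 1) * ((\<epsilon> + 8 * \<delta>) * n))))"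
    unfolding eqL using tot n0 by (intro mult_left_mono) auto
  also have "\<dots> = 1 / m + (m - 1) / m * (\<epsilon> + 8 * \<delta>)" using m0 n0 by (simp add: field_simps power2_eq_square)
  also have "\<dots> \<le> 1 / m + (\<epsilon> + 8 * \<delta>)"
  proof -
    have "(m - 1) / m \<le> (1::real)" using m0 by simp
    hence "(m - 1) / m * (\<epsilon> + 8 * \<delta>) \<le> 1 * (\<epsilon> + 8 * \<delta>)"
      using ep dl by (intro mult_right_mono) auto
    thus ?thesis by simp
  qed
  finally show ?thesis unfolding m_def N_def by simp
qed



lemma cond_hoeff_inj:
  fixes I :: "'i set" and J :: "'j set" and e :: "'j \<Rightarrow> 'i" and q :: "'i \<Rightarrow> real"
    and c :: "('i \<Rightarrow> bool) \<Rightarrow> 'j \<Rightarrow> bool \<Rightarrow> real"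
  assumes fin: "finite I" and sub: "e ` J \<subseteq> I" and inj: "inj_on e J" and ne: "J \<noteq> {}"
    and q: "\<And>j. j \<in> J \<Longrightarrow> 0 \<le> q (e j) \<and> q (e j) \<le> 1"
    and dep: "\<And>F F'. (\<And>x. x \<in> I - e ` J \<Longrightarrow> F x = F' x) \<Longrightarrow> c F = c F'"
    and c: "\<And>F j. j \<in> J \<Longrightarrow> \<bar>c F j True - c F j False\<bar> \<le> 1"
    and mean: "\<And>F j. j \<in> J \<Longrightarrow> q (e j) * c F j True + (1 - q (e j)) * c F j False = 0"
    and t: "t \<ge> 0"
  shows "measure_pmf.prob (Pi_pmf I False (\<lambda>l. bernoulli_pmf (q l)))
           {F. (\<Sum>j\<in>J. c F j (F (e j))) \<ge> t} \<le> exp (-2 * t\<^sup>2 / card J)" (is ?A)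
    and "measure_pmf.prob (Pi_pmf I False (\<lambda>l. bernoulli_pmf (q l)))
           {F. \<bar>\<Sum>j\<in>J. c F j (F (e j))\<bar> \<ge> t} \<le> 2 * exp (-2 * t\<^sup>2 / card J)" (is ?B)
proof -
  have finJ: "finite J" using finite_imageD[OF finite_subset[OF sub fin] inj] .
  define ie where "ie = the_inv_into J e"
  have ie: "j \<in> J \<Longrightarrow> ie (e j) = j" for j unfolding ie_def using inj by (rule the_inv_into_f_f)
  define c' where "c' = (\<lambda>F l b. c F (ie l) b)"
  have re: "(\<Sum>l\<in>e ` J. f l) = (\<Sum>j\<in>J. f (e j))" for f :: "'i \<Rightarrow> real"
    using inj by (simp add: sum.reindex)
  have s1: "(\<Sum>l\<in>e ` J. c' F l (F l)) = (\<Sum>j\<in>J. c F j (F (e j)))" for F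
    unfolding re c'_def by (intro sum.cong) (auto simp: ie)
  have s2: "(\<Sum>l\<in>e ` J. q l * c' F l True + (1 - q l) * c' F l False) = 0" for F
    unfolding re c'_def by (intro sum.neutral) (auto simp: ie mean)
  have cardJ: "card (e ` J) = card J" using inj by (simp add: card_image)
  have q': "\<And>l. l \<in> e ` J \<Longrightarrow> 0 \<le> q l \<and> q l \<le> 1" using q by auto
  have dep': "\<And>F F'. (\<And>x. x \<in> I - e ` J \<Longrightarrow> F x = F' x) \<Longrightarrow> c' F = c' F'"
    unfolding c'_def using dep by metis
  have c'': "\<And>F l. l \<in> e ` J \<Longrightarrow> \<bar>c' F l True - c' F l False\<bar> \<le> 1"
    unfolding c'_def using c ie by auto
  have neJ: "e ` J \<noteq> {}" using ne by auto
  note H = cond_hoeff[where I=I and L="e ` J" and q=q and c=c' and t=t, OF fin sub neJ q' dep' c'' t]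
  show ?A using H(1) unfolding s1 s2 cardJ by simp
  have "measure_pmf.prob (Pi_pmf I False (\<lambda>l. bernoulli_pmf (q l))) {F. \<bar>\<Sum>j\<in>J. c F j (F (e j))\<bar> \<ge> t}
     \<le> measure_pmf.prob (Pi_pmf I False (\<lambda>l. bernoulli_pmf (q l))) {F. (\<Sum>j\<in>J. c F j (F (e j))) \<ge> t}
      + measure_pmf.prob (Pi_pmf I False (\<lambda>l. bernoulli_pmf (q l))) {F. (\<Sum>j\<in>J. c F j (F (e j))) \<le> - t}"
    by (rule order.trans[OF measure_pmf.finite_measure_mono measure_Un_le]) auto
  also have "\<dots> \<le> exp (-2 * t\<^sup>2 / card J) + exp (-2 * t\<^sup>2 / card J)"
    using H(1) H(2) unfolding s1 s2 cardJ by (intro add_mono) simp_all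
  finally show ?B by simp
qed



lemma offdiag_finite: "finite (offdiag n)"
proof -
  have "offdiag n \<subseteq> {1..n} \<times> {1..n}" unfolding offdiag_def by auto
  thus ?thesis by (rule finite_subset) auto
qed

lemma supp_offdiag:
  assumes "F \<in> set_pmf (Pi_pmf (offdiag n) False p)"
  shows "(\<lambda>x. x \<in> offdiag n \<and> F x) = F"
  using set_Pi_pmf_subset[of "offdiag n" False p, OF offdiag_finite] assms by (auto simp: fun_eq_iff)

lemma Pi_case: "(\<lambda>(i, j). bernoulli_pmf (P i j)) = (\<lambda>l. bernoulli_pmf (case_prod P l))"
  by (auto simp: fun_eq_iff)

lemma prob_supp_mono:
  assumes "\<And>x. x \<in> set_pmf M \<Longrightarrow> x \<in> S \<Longrightarrow> x \<in> S'"
  shows "measure_pmf.prob M S \<le> measure_pmf.prob M S'"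
proof -
  have "measure_pmf.prob M S = measure_pmf.prob M (S \<inter> set_pmf M)" by (simp add: measure_Int_set_pmf)
  also have "\<dots> \<le> measure_pmf.prob M S'" using assms by (intro measure_pmf.finite_measure_mono) auto
  finally show ?thesis .
qed

lemma exp_mono_card:
  assumes "c \<le> n" "0 < c"
  shows "exp (-2 * t\<^sup>2 / real c) \<le> exp (-2 * t\<^sup>2 / real n)"
proof -
  have "2 * t\<^sup>2 / real n \<le> 2 * t\<^sup>2 / real c" using assms by (intro divide_left_mono) auto
  thus ?thesis by simp
qed

lemma sum_split2:
  fixes n :: nat and f :: "nat \<Rightarrow> real"
  assumes "i \<in> {1..n}" "k \<in> {1..n}" "i \<noteq> k"
  shows "(\<Sum>l\<in>{1..n}. f l) = (\<Sum>l\<in>{1..n} - {i, k}. f l) + f i + f k"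
proof -
  have "(\<Sum>l\<in>{1..n}. f l) = f i + (\<Sum>l\<in>{1..n} - {i}. f l)" using assms by (subst sum.remove) auto
  also have "(\<Sum>l\<in>{1..n} - {i}. f l) = f k + (\<Sum>l\<in>{1..n} - {i} - {k}. f l)" using assms by (subst sum.remove) auto
  also have "{1..n} - {i} - {k} = {1..n} - {i, k}" by auto
  finally show ?thesis by simp
qed

lemma sum_split1:
  fixes n :: nat and f :: "nat \<Rightarrow> real"
  assumes "k \<in> {1..n}"
  shows "(\<Sum>l\<in>{1..n}. f l) = (\<Sum>l\<in>{1..n} - {k}. f l) + f k"
  using assms by (subst sum.remove) auto

lemma card_J2: "i \<in> {1..(n::nat)} \<Longrightarrow> k \<in> {1..n} \<Longrightarrow> i \<noteq> k \<Longrightarrow> card ({1..n} - {i, k}) = n - 2"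
  by (subst card_Diff_subset) auto
lemma card_J1: "k \<in> {1..(n::nat)} \<Longrightarrow> card ({1..n} - {k}) = n - 1"
  by simp
lemma ev1:
  fixes P :: "nat \<Rightarrow> nat \<Rightarrow> real"
  assumes n3: "n \<ge> 3" and P01: "\<And>i l. 0 \<le> P i l \<and> P i l \<le> 1"
    and ik: "i \<in> {1..n}" "k \<in> {1..n}" "i \<noteq> k" and T: "T \<ge> 2"
  shows "measure_pmf.prob (Pi_pmf (offdiag n) False (\<lambda>(i, j). bernoulli_pmf (P i j)))
     {F. \<bar>\<Sum>l\<in>{1..n}. (adj (\<lambda>a b. F (a, b)) i l - P i l) * adj (\<lambda>a b. F (a, b)) k l\<bar> > T}
     \<le> 2 * exp (-2 * (T - 2)\<^sup>2 / n)"
proof -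
  define J where "J = {1..n} - {i, k}"
  define R where "R = (\<lambda>F x. x \<in> offdiag n \<and> (F x :: bool))"
  define c where "c = (\<lambda>F l b. ((if b then 1 else 0) - P i l) * adj (\<lambda>a b. R F (a, b)) k l)"
  let ?M = "Pi_pmf (offdiag n) False (\<lambda>(i, j). bernoulli_pmf (P i j))"
  have cardJ: "card J = n - 2" unfolding J_def using card_J2[OF ik] .
  have "measure_pmf.prob ?M
     {F. \<bar>\<Sum>l\<in>{1..n}. (adj (\<lambda>a b. F (a, b)) i l - P i l) * adj (\<lambda>a b. F (a, b)) k l\<bar> > T}
     \<le> measure_pmf.prob ?M {F. \<bar>\<Sum>j\<in>J. c F j (F ((\<lambda>l. (i, l)) j))\<bar> \<ge> T - 2}"
  proof (rule prob_supp_mono)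
    fix F assume F: "F \<in> set_pmf ?M"
      and big: "F \<in> {F. \<bar>\<Sum>l\<in>{1..n}. (adj (\<lambda>a b. F (a, b)) i l - P i l) * adj (\<lambda>a b. F (a, b)) k l\<bar> > T}"
    have RF: "R F = F" unfolding R_def by (rule supp_offdiag[OF F])
    let ?f = "\<lambda>l. (adj (\<lambda>a b. F (a, b)) i l - P i l) * adj (\<lambda>a b. F (a, b)) k l"
    have b1: "\<bar>?f l\<bar> \<le> 1" for l
      using P01[of i l] by (auto simp: adj_def abs_mult)
    have "(\<Sum>l\<in>{1..n}. ?f l) = (\<Sum>l\<in>J. ?f l) + ?f i + ?f k" unfolding J_def by (rule sum_split2[OF ik])
    moreover have "(\<Sum>l\<in>J. ?f l) = (\<Sum>j\<in>J. c F j (F ((\<lambda>l. (i, l)) j)))"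
      unfolding c_def RF by (intro sum.cong) (auto simp: adj_def)
    ultimately show "F \<in> {F. \<bar>\<Sum>j\<in>J. c F j (F ((\<lambda>l. (i, l)) j))\<bar> \<ge> T - 2}"
      using big b1[of i] b1[of k] by auto
  qed
  also have "\<dots> \<le> 2 * exp (-2 * (T - 2)\<^sup>2 / card J)"
    unfolding Pi_case
  proof (rule cond_hoeff_inj(2)[OF offdiag_finite])
    show "(\<lambda>l. (i, l)) ` J \<subseteq> offdiag n" unfolding J_def offdiag_def using ik by auto
    show "inj_on (\<lambda>l. (i, l)) J" by (auto simp: inj_on_def)
    show "J \<noteq> {}" using cardJ n3 by (auto)
    show "\<And>j. j \<in> J \<Longrightarrow> 0 \<le> case_prod P (i, j) \<and> case_prod P (i, j) \<le> 1" using P01 by auto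
    show "c F = c F'" if "\<And>x. x \<in> offdiag n - (\<lambda>l. (i, l)) ` J \<Longrightarrow> F x = F' x" for F F'
    proof -
      have "R F (k, l) = R F' (k, l)" for l using that[of "(k, l)"] ik unfolding R_def by auto
      thus ?thesis unfolding c_def adj_def by (auto simp: fun_eq_iff)
    qed
    show "\<And>F j. j \<in> J \<Longrightarrow> \<bar>c F j True - c F j False\<bar> \<le> 1" unfolding c_def adj_def by auto
    show "\<And>F j. j \<in> J \<Longrightarrow> case_prod P (i, j) * c F j True + (1 - case_prod P (i, j)) * c F j False = 0"
      unfolding c_def by (simp add: algebra_simps)
    show "0 \<le> T - 2" using T by simp
  qed
  also have "\<dots> \<le> 2 * exp (-2 * (T - 2)\<^sup>2 / n)"
    using exp_mono_card[of "card J" n "T - 2"] cardJ n3 by auto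
  finally show ?thesis .
qed

lemma ev2:
  fixes P :: "nat \<Rightarrow> nat \<Rightarrow> real"
  assumes n3: "n \<ge> 3" and P01: "\<And>i l. 0 \<le> P i l \<and> P i l \<le> 1"
    and xk: "x \<in> {1..n}" "k \<in> {1..n}" and T: "T \<ge> 2"
  shows "measure_pmf.prob (Pi_pmf (offdiag n) False (\<lambda>(i, j). bernoulli_pmf (P i j)))
     {F. \<bar>\<Sum>l\<in>{1..n}. P x l * (adj (\<lambda>a b. F (a, b)) k l - P k l)\<bar> > T}
     \<le> 2 * exp (-2 * (T - 2)\<^sup>2 / n)"
proof -
  define J where "J = {1..n} - {k}"
  define c where "c = (\<lambda>(F::nat\<times>nat\<Rightarrow>bool) l b. P x l * ((if b then 1 else 0) - P k l))"
  let ?M = "Pi_pmf (offdiag n) False (\<lambda>(i, j). bernoulli_pmf (P i j))"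
  have cardJ: "card J = n - 1" unfolding J_def using card_J1[OF xk(2)] .
  have "measure_pmf.prob ?M
     {F. \<bar>\<Sum>l\<in>{1..n}. P x l * (adj (\<lambda>a b. F (a, b)) k l - P k l)\<bar> > T}
     \<le> measure_pmf.prob ?M {F. \<bar>\<Sum>j\<in>J. c F j (F ((\<lambda>l. (k, l)) j))\<bar> \<ge> T - 2}"
  proof (rule prob_supp_mono)
    fix F assume F: "F \<in> set_pmf ?M"
      and big: "F \<in> {F. \<bar>\<Sum>l\<in>{1..n}. P x l * (adj (\<lambda>a b. F (a, b)) k l - P k l)\<bar> > T}"
    let ?f = "\<lambda>l. P x l * (adj (\<lambda>a b. F (a, b)) k l - P k l)"
    have b1: "\<bar>?f l\<bar> \<le> 1" for l
      using P01[of x l] P01[of k l] by (auto simp: adj_def abs_mult intro: mult_le_one)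
    have "(\<Sum>l\<in>{1..n}. ?f l) = (\<Sum>l\<in>J. ?f l) + ?f k" unfolding J_def by (rule sum_split1[OF xk(2)])
    moreover have "(\<Sum>l\<in>J. ?f l) = (\<Sum>j\<in>J. c F j (F ((\<lambda>l. (k, l)) j)))"
      unfolding c_def by (intro sum.cong) (auto simp: adj_def)
    ultimately show "F \<in> {F. \<bar>\<Sum>j\<in>J. c F j (F ((\<lambda>l. (k, l)) j))\<bar> \<ge> T - 2}"
      using big b1[of k] by auto
  qed
  also have "\<dots> \<le> 2 * exp (-2 * (T - 2)\<^sup>2 / card J)"
    unfolding Pi_case
  proof (rule cond_hoeff_inj(2)[OF offdiag_finite])
    show "(\<lambda>l. (k, l)) ` J \<subseteq> offdiag n" unfolding J_def offdiag_def using xk by auto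
    show "inj_on (\<lambda>l. (k, l)) J" by (auto simp: inj_on_def)
    show "J \<noteq> {}" using cardJ n3 by (auto)
    show "\<And>j. j \<in> J \<Longrightarrow> 0 \<le> case_prod P (k, j) \<and> case_prod P (k, j) \<le> 1" using P01 by auto
    show "c F = c F'" for F F' unfolding c_def by simp
    show "\<And>F j. j \<in> J \<Longrightarrow> \<bar>c F j True - c F j False\<bar> \<le> 1" unfolding c_def using P01 by (auto simp: algebra_simps)
    show "\<And>F j. j \<in> J \<Longrightarrow> case_prod P (k, j) * c F j True + (1 - case_prod P (k, j)) * c F j False = 0"
      unfolding c_def by (simp add: algebra_simps)
    show "0 \<le> T - 2" using T by simp
  qed
  also have "\<dots> \<le> 2 * exp (-2 * (T - 2)\<^sup>2 / n)"
    using exp_mono_card[of "card J" n "T - 2"] cardJ n3 by auto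
  finally show ?thesis .
qed

lemma ev3:
  fixes P :: "nat \<Rightarrow> nat \<Rightarrow> real"
  assumes n3: "n \<ge> 3" and P01: "\<And>i l. 0 \<le> P i l \<and> P i l \<le> 1"
    and ik: "i \<in> {1..n}" "k \<in> {1..n}" "i \<noteq> k" and T: "T \<ge> 2"
  shows "measure_pmf.prob (Pi_pmf (offdiag n) False (\<lambda>(i, j). bernoulli_pmf (P i j)))
     {F. (\<Sum>l\<in>{1..n}. (adj (\<lambda>a b. F (a, b)) i l - P i l) * (adj (\<lambda>a b. F (a, b)) k l - P k l)) > T}
     \<le> exp (-2 * (T - 2)\<^sup>2 / n)"
proof -
  define J where "J = {1..n} - {i, k}"
  define R where "R = (\<lambda>F x. x \<in> offdiag n \<and> (F x :: bool))"
  define c where "c = (\<lambda>F l b. ((if b then 1 else 0) - P i l) * (adj (\<lambda>a b. R F (a, b)) k l - P k l))"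
  let ?M = "Pi_pmf (offdiag n) False (\<lambda>(i, j). bernoulli_pmf (P i j))"
  have cardJ: "card J = n - 2" unfolding J_def using card_J2[OF ik] .
  have "measure_pmf.prob ?M
     {F. (\<Sum>l\<in>{1..n}. (adj (\<lambda>a b. F (a, b)) i l - P i l) * (adj (\<lambda>a b. F (a, b)) k l - P k l)) > T}
     \<le> measure_pmf.prob ?M {F. (\<Sum>j\<in>J. c F j (F ((\<lambda>l. (i, l)) j))) \<ge> T - 2}"
  proof (rule prob_supp_mono)
    fix F assume F: "F \<in> set_pmf ?M"
      and big: "F \<in> {F. (\<Sum>l\<in>{1..n}. (adj (\<lambda>a b. F (a, b)) i l - P i l) * (adj (\<lambda>a b. F (a, b)) k l - P k l)) > T}"
    have RF: "R F = F" unfolding R_def by (rule supp_offdiag[OF F])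
    let ?f = "\<lambda>l. (adj (\<lambda>a b. F (a, b)) i l - P i l) * (adj (\<lambda>a b. F (a, b)) k l - P k l)"
    have b1: "\<bar>?f l\<bar> \<le> 1" for l
    proof -
      have "\<bar>adj (\<lambda>a b. F (a, b)) i l - P i l\<bar> \<le> 1" "\<bar>adj (\<lambda>a b. F (a, b)) k l - P k l\<bar> \<le> 1"
        using P01[of i l] P01[of k l] by (auto simp: adj_def)
      thus ?thesis by (simp add: abs_mult mult_le_one)
    qed
    have "(\<Sum>l\<in>{1..n}. ?f l) = (\<Sum>l\<in>J. ?f l) + ?f i + ?f k" unfolding J_def by (rule sum_split2[OF ik])
    moreover have "(\<Sum>l\<in>J. ?f l) = (\<Sum>j\<in>J. c F j (F ((\<lambda>l. (i, l)) j)))"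
      unfolding c_def RF by (intro sum.cong) (auto simp: adj_def)
    ultimately show "F \<in> {F. (\<Sum>j\<in>J. c F j (F ((\<lambda>l. (i, l)) j))) \<ge> T - 2}"
      using big b1[of i] b1[of k] by auto
  qed
  also have "\<dots> \<le> exp (-2 * (T - 2)\<^sup>2 / card J)"
    unfolding Pi_case
  proof (rule cond_hoeff_inj(1)[OF offdiag_finite])
    show "(\<lambda>l. (i, l)) ` J \<subseteq> offdiag n" unfolding J_def offdiag_def using ik by auto
    show "inj_on (\<lambda>l. (i, l)) J" by (auto simp: inj_on_def)
    show "J \<noteq> {}" using cardJ n3 by (auto)
    show "\<And>j. j \<in> J \<Longrightarrow> 0 \<le> case_prod P (i, j) \<and> case_prod P (i, j) \<le> 1" using P01 by auto
    show "c F = c F'" if "\<And>x. x \<in> offdiag n - (\<lambda>l. (i, l)) ` J \<Longrightarrow> F x = F' x" for F F'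
    proof -
      have "R F (k, l) = R F' (k, l)" for l using that[of "(k, l)"] ik unfolding R_def by auto
      thus ?thesis unfolding c_def adj_def by (auto simp: fun_eq_iff)
    qed
    show "\<bar>c F j True - c F j False\<bar> \<le> 1" for F j
    proof -
      have "c F j True - c F j False = adj (\<lambda>a b. R F (a, b)) k j - P k j"
        unfolding c_def by (simp add: algebra_simps)
      thus ?thesis using P01[of k j] by (auto simp: adj_def)
    qed
    show "\<And>F j. j \<in> J \<Longrightarrow> case_prod P (i, j) * c F j True + (1 - case_prod P (i, j)) * c F j False = 0"
      unfolding c_def by (simp add: algebra_simps)
    show "0 \<le> T - 2" using T by simp
  qed
  also have "\<dots> \<le> exp (-2 * (T - 2)\<^sup>2 / n)"
    using exp_mono_card[of "card J" n "T - 2"] cardJ n3 by auto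
  finally show ?thesis .
qed



lemma map_eq_bernoulli: "map_pmf (\<lambda>z. z = c) r = bernoulli_pmf (pmf r c)"
proof (rule pmf_eqI)
  fix b :: bool
  have p: "0 \<le> pmf r c" "pmf r c \<le> 1" by (auto simp: pmf_le_1)
  show "pmf (map_pmf (\<lambda>z. z = c) r) b = pmf (bernoulli_pmf (pmf r c)) b"
  proof (cases b)
    case True
    have "(\<lambda>z. z = c) -` {True} = {c}" by auto
    thus ?thesis using True p by (simp add: pmf_map measure_pmf_single)
  next
    case False
    have "(\<lambda>z. z = c) -` {False} = UNIV - {c}" by auto
    moreover have "measure_pmf.prob r (UNIV - {c}) = 1 - pmf r c"
      using measure_pmf.prob_compl[of "{c}" r] by (simp add: measure_pmf_single)
    ultimately show ?thesis using False p by (simp add: pmf_map)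
  qed
qed

lemma evZ:
  fixes r :: "nat pmf" and h e :: real and c n :: nat
  assumes c: "c \<noteq> 0" and n: "n \<ge> 1" and rc: "pmf r c \<ge> h + e" and h: "h > 0" and ne: "n * e \<ge> 1"
  shows "measure_pmf.prob (Pi_pmf {1..n} 0 (\<lambda>_. r)) {Z. real (card {j\<in>{1..n}. Z j = c}) < h * (real n - 1) + 1}
         \<le> exp (-2 * (n * e - 1)\<^sup>2 / n)"
proof -
  let ?q = "pmf r c"
  have m: "map_pmf (\<lambda>Z j. Z j = c) (Pi_pmf {1..n} 0 (\<lambda>_. r)) = Pi_pmf {1..n} False (\<lambda>_. bernoulli_pmf ?q)"
  proof -
    have "Pi_pmf {1..n} False (\<lambda>_. map_pmf (\<lambda>z. z = c) r) = map_pmf (\<lambda>h. (\<lambda>z. z = c) \<circ> h) (Pi_pmf {1..n} 0 (\<lambda>_. r))"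
      by (rule Pi_pmf_map) (use c in auto)
    thus ?thesis by (simp add: map_eq_bernoulli o_def)
  qed
  have cnt: "real (card {j\<in>{1..n}. Z j = c}) = (\<Sum>j\<in>{1..n}. (\<lambda>j b. if b then 1 else 0) j (Z j = c))" for Z :: "nat \<Rightarrow> nat"
  proof -
    have "(\<Sum>j\<in>{1..n}. (if Z j = c then 1 else 0 :: real)) = (\<Sum>j\<in>{j\<in>{1..n}. Z j = c}. 1)"
      by (subst sum.inter_filter[symmetric]) auto
    thus ?thesis by simp
  qed
  have "measure_pmf.prob (Pi_pmf {1..n} 0 (\<lambda>_. r)) {Z. real (card {j\<in>{1..n}. Z j = c}) < h * (real n - 1) + 1}
      \<le> measure_pmf.prob (Pi_pmf {1..n} 0 (\<lambda>_. r)) ((\<lambda>Z j. Z j = c) -`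
          {W. (\<Sum>j\<in>{1..n}. (\<lambda>j b. if b then 1 else 0) j (W j)) \<le>
              (\<Sum>j\<in>{1..n}. ?q * (\<lambda>j b. if b then 1 else 0 :: real) j True + (1 - ?q) * (\<lambda>j b. if b then 1 else 0) j False) - (n * e - 1)})"
  proof (intro measure_pmf.finite_measure_mono subsetI)
    fix Z assume "Z \<in> {Z. real (card {j\<in>{1..n}. Z j = c}) < h * (real n - 1) + 1}"
    hence "(\<Sum>j\<in>{1..n}. (\<lambda>j b. if b then 1 else 0) j (Z j = c)) < h * (real n - 1) + 1" unfolding cnt by simp
    moreover have "h * (real n - 1) + 1 \<le> n * ?q - (n * e - 1)"
    proof -
      have "n * (h + e) \<le> n * ?q" using rc by (intro mult_left_mono) auto
      thus ?thesis using h by (simp add: algebra_simps)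
    qed
    ultimately show "Z \<in> (\<lambda>Z j. Z j = c) -` {W. (\<Sum>j\<in>{1..n}. (\<lambda>j b. if b then 1 else 0) j (W j)) \<le>
              (\<Sum>j\<in>{1..n}. ?q * (\<lambda>j b. if b then 1 else 0 :: real) j True + (1 - ?q) * (\<lambda>j b. if b then 1 else 0) j False) - (n * e - 1)}"
      by simp
  qed simp
  also have "\<dots> = measure_pmf.prob (Pi_pmf {1..n} False (\<lambda>_. bernoulli_pmf ?q))
          {W. (\<Sum>j\<in>{1..n}. (\<lambda>j b. if b then 1 else 0) j (W j)) \<le>
              (\<Sum>j\<in>{1..n}. ?q * (\<lambda>j b. if b then 1 else 0 :: real) j True + (1 - ?q) * (\<lambda>j b. if b then 1 else 0) j False) - (n * e - 1)}"
    by (subst m[symmetric]) (simp add: measure_map_pmf)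
  also have "\<dots> \<le> exp (-2 * (n * e - 1)\<^sup>2 / card {1..n})"
    by (rule hoeff_pi(2)) (use n ne in \<open>auto simp: pmf_le_1\<close>)
  finally show ?thesis by simp
qed



lemma card_offdiag: "card (offdiag n) = n * (n - 1)"
proof -
  have "offdiag n = Sigma {1..n} (\<lambda>i. {1..n} - {i})" unfolding offdiag_def by auto
  hence "card (offdiag n) = (\<Sum>i\<in>{1..n}. card ({1..n} - {i}))" by simp
  also have "\<dots> = (\<Sum>i\<in>{1..n}. n - 1)" by (intro sum.cong) auto
  finally show ?thesis by simp
qed

lemma supp_sbm:
  assumes "\<omega> \<in> set_pmf (sbm_pmf n r B g)" "j \<in> {1..n}"
  shows "fst \<omega> j \<in> set_pmf r"
  using assms unfolding sbm_pmf_def by (auto simp: set_Pi_pmf PiE_dflt_def)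

lemma prob_sbm_Z:
  "measure_pmf.prob (sbm_pmf n r B g) {\<omega>. \<Phi> (fst \<omega>)} = measure_pmf.prob (Pi_pmf {1..n} 0 (\<lambda>_. r)) {Z. \<Phi> Z}"
proof -
  have "map_pmf fst (sbm_pmf n r B g) = Pi_pmf {1..n} 0 (\<lambda>_. r)"
    unfolding sbm_pmf_def by (simp add: map_bind_pmf bind_return_pmf' map_pmf_def[symmetric] o_def pmf.map_comp map_pmf_const)
  hence "measure_pmf.prob (Pi_pmf {1..n} 0 (\<lambda>_. r)) {Z. \<Phi> Z} = measure_pmf.prob (sbm_pmf n r B g) (fst -` {Z. \<Phi> Z})"
    by (metis measure_map_pmf)
  thus ?thesis by (simp add: vimage_def)
qed

lemma prob_sbm_F:
  assumes "\<And>Z. measure_pmf.prob (Pi_pmf (offdiag n) False (\<lambda>(i, j). bernoulli_pmf (g * B (Z i) (Z j))))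
                 {F. (Z, \<lambda>a b. F (a, b)) \<in> S} \<le> b"
  shows "measure_pmf.prob (sbm_pmf n r B g) S \<le> b"
  unfolding sbm_pmf_def
proof (rule prob_bind_le)
  fix Z
  show "measure_pmf.prob (Pi_pmf (offdiag n) False (\<lambda>(i, j). bernoulli_pmf (g * B (Z i) (Z j))) \<bind>
          (\<lambda>F. return_pmf (Z, \<lambda>i j. F (i, j)))) S \<le> b"
    unfolding map_pmf_def[symmetric] measure_map_pmf vimage_def using assms[of Z] by simp
qed

lemma quadK: fixes x :: real assumes "x \<ge> 2" shows "x\<^sup>2 \<le> 8 * (x - 1)\<^sup>2"
proof -
  have "(x/2)\<^sup>2 \<le> (x - 1)\<^sup>2" using assms by (intro power_mono) auto
  thus ?thesis by (simp add: power_divide) (smt (verit) zero_le_power2)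
qed
lemma quadM: fixes x :: real assumes "x \<ge> 10/3" shows "x\<^sup>2 \<le> 8 * (x - 2)\<^sup>2"
proof -
  have "(2*x/5)\<^sup>2 \<le> (x - 2)\<^sup>2" using assms by (intro power_mono) auto
  thus ?thesis by (simp add: power_divide power_mult_distrib) (smt (verit) zero_le_power2)
qed

lemma exp2: "exp (-2::real) \<ge> 1/9"
proof -
  have "exp (2::real) = exp 1 * exp 1" by (simp flip: exp_add)
  also have "\<dots> \<le> 3 * 3" using exp_le by (intro mult_mono) auto
  finally have "exp (2::real) \<le> 9" by simp
  thus ?thesis by (simp add: exp_minus field_simps)
qed

lemma exp_lower: "exp (- x) \<ge> 1 - (x::real)"
  using exp_ge_add_one_self[of "-x"] by simp



lemma div_le_self1: "0 \<le> (a::real) \<Longrightarrow> 0 \<le> e \<Longrightarrow> a / (1 + e) \<le> a"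
  using divide_left_mono[of 1 "1 + e" a] by simp

theorem theorem1:
  fixes K :: "nat \<Rightarrow> nat" and rho :: "nat \<Rightarrow> nat pmf"
    and B :: "nat \<Rightarrow> nat \<Rightarrow> nat \<Rightarrow> real" and gamma :: "nat \<Rightarrow> real"
    and n :: nat and h eps_m eps_AP eps_pi :: real
  assumes K_pos: "\<And>n. K n \<ge> 1"
    and rho_supp: "\<And>n. set_pmf (rho n) \<subseteq> {1..K n}"
    and rho_min_pos: "\<And>n. rho_min (K n) (rho n) > 0"
    and B_range: "\<And>n k l. 0 \<le> B n k l \<and> B n k l \<le> 1"
    and gamma_range: "\<And>n. 0 < gamma n \<and> gamma n \<le> 1"
    and cond_ab: "\<exists>n_rho C_rho C_pi eta.
        C_rho > 0 \<and>
        (\<forall>n\<ge>n_rho. rho_min (K n) (rho n) \<ge> C_rho * sqrt (ln (real n) / real n)) \<and>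
        0 < C_pi \<and> C_pi < C_rho \<and>
        (\<forall>n\<ge>1. eta n > 0 \<and> rho_min (K n) (rho n) > eta n \<and>
                 eta n \<ge> C_pi * sqrt (ln (real n) / real n)) \<and>
        filterlim (\<lambda>n. (1/4 * real n * (eta n)\<^sup>2) / (1 + eta n) - ln (2 * real (K n)))
                  at_top sequentially \<and>
        ((\<lambda>n. real (K n) * real n powr (- (C_pi\<^sup>2) / 4)) \<longlonglongrightarrow> 0)"
    and h: "0 < h" "h < 1"
    and eps: "eps_m > 0" "eps_AP > 0" "eps_pi > 0" "eps_pi \<le> rho_min (K n) (rho n) - h"
  shows "measure_pmf.prob (sbm_pmf n (rho n) (B n) (gamma n))
           {(Z, A). \<forall>i\<in>{1..n}.
              1 / real n * (\<Sum>j\<in>{1..n}. (Ptilde n A h i j - gamma n * B n (Z i) (Z j))\<^sup>2)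
              \<le> 1 / real (card (NS n A h i)) + eps_m + 2 / real n + 8 * eps_AP}
         \<ge> 1 - 2 * real (K n) * exp (- (1/4 * real n * eps_pi\<^sup>2) / (1 + eps_pi))
             - 2 * (real n)\<^sup>2 * exp (- (1/4 * real n * (eps_AP - 4 / real n)\<^sup>2) / (1 + eps_AP))
             - real n * (real n - 1) * exp (- (1/4 * real n * eps_m\<^sup>2) / (1 + eps_m))"
proof -
  let ?S = "sbm_pmf n (rho n) (B n) (gamma n)"
  define G where "G = {(Z, A). \<forall>i\<in>{1..n}.
              1 / real n * (\<Sum>j\<in>{1..n}. (Ptilde n A h i j - gamma n * B n (Z i) (Z j))\<^sup>2)
              \<le> 1 / real (card (NS n A h i)) + eps_m + 2 / real n + 8 * eps_AP}"
  define TK where "TK = 2 * real (K n) * exp (- (1/4 * real n * eps_pi\<^sup>2) / (1 + eps_pi))"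
  define TA where "TA = 2 * (real n)\<^sup>2 * exp (- (1/4 * real n * (eps_AP - 4 / real n)\<^sup>2) / (1 + eps_AP))"
  define TM where "TM = real n * (real n - 1) * exp (- (1/4 * real n * eps_m\<^sup>2) / (1 + eps_m))"
  have goal_eq: "?thesis \<longleftrightarrow> measure_pmf.prob ?S G \<ge> 1 - TK - TA - TM"
    unfolding G_def TK_def TA_def TM_def by (rule refl)
  have TK0: "TK \<ge> 0" unfolding TK_def by simp
  have TA0: "TA \<ge> 0" unfolding TA_def by simp
  have TM0: "TM \<ge> 0" unfolding TM_def by (cases n) auto
  have Kpos: "K n \<ge> 1" by (rule K_pos)
  have rmin_c: "pmf (rho n) c \<ge> rho_min (K n) (rho n)" if "c \<in> {1..K n}" for c
    unfolding rho_min_def using that by (intro Min_le) auto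
  have rmin_le: "rho_min (K n) (rho n) \<le> 1"
    using rmin_c[of 1] Kpos pmf_le_1[of "rho n" 1] by auto
  have ep1: "eps_pi < 1" using eps(4) h rmin_le by linarith
  show ?thesis
  proof (cases "TK + TA + TM \<ge> 1")
    case True
    then show ?thesis unfolding goal_eq using measure_nonneg[of "measure_pmf ?S" G] by linarith
  next
    case False
    hence TK1: "TK < 1" and TA1: "TA < 1" and TM1: "TM < 1" using TK0 TA0 TM0 by linarith+
    define XK where "XK = (1/4 * real n * eps_pi\<^sup>2) / (1 + eps_pi)"
    define XA where "XA = (1/4 * real n * (eps_AP - 4 / real n)\<^sup>2) / (1 + eps_AP)"
    define XM where "XM = (1/4 * real n * eps_m\<^sup>2) / (1 + eps_m)"
    have TKe: "TK = 2 * real (K n) * exp (- XK)" unfolding TK_def XK_def by simp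
    have TAe: "TA = 2 * (real n)\<^sup>2 * exp (- XA)" unfolding TA_def XA_def by simp
    have TMe: "TM = real n * (real n - 1) * exp (- XM)" unfolding TM_def XM_def by simp
    have XK: "XK > 1/2"
    proof (rule ccontr)
      assume "\<not> XK > 1/2"
      hence "exp (- XK) \<ge> 1/2" using exp_lower[of XK] by linarith
      moreover have "real (K n) \<ge> 1" using Kpos by simp
      ultimately have "2 * real (K n) * exp (- XK) \<ge> 2 * 1 * (1/2)"
        by (intro mult_mono) auto
      thus False using TK1 TKe by simp
    qed
    have nep: "real n * eps_pi > 2"
    proof -
      have "1/2 * (1 + eps_pi) < 1/4 * real n * eps_pi\<^sup>2"
        using XK eps(3) unfolding XK_def by (simp add: field_simps)
      hence a: "real n * eps_pi\<^sup>2 > 2" using eps(3) by simp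
      have "real n * eps_pi\<^sup>2 \<le> real n * eps_pi"
        using eps(3) ep1 by (intro mult_left_mono) (auto simp: power2_eq_square mult_le_cancel_left1)
      thus ?thesis using a by linarith
    qed
    have n3: "n \<ge> 3"
    proof -
      have "real n * eps_pi \<le> real n" using ep1 eps(3) by (simp add: mult_left_le)
      hence "real n > 2" using nep by linarith
      thus ?thesis by linarith
    qed
    have n0: "real n > 0" using n3 by simp
    have nn6: "real n * (real n - 1) \<ge> 6"
    proof -
      have "real n \<ge> 3" using n3 by simp
      hence "real n * (real n - 1) \<ge> 3 * 2" by (intro mult_mono) auto
      thus ?thesis by simp
    qed
    have XM: "XM > 5/6"
    proof (rule ccontr)
      assume "\<not> XM > 5/6"
      hence "exp (- XM) \<ge> 1/6" using exp_lower[of XM] by linarith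
      hence "real n * (real n - 1) * exp (- XM) \<ge> 6 * (1/6)" using nn6 by (intro mult_mono) auto
      thus False using TM1 TMe by simp
    qed
    have nem: "real n * eps_m \<ge> 10/3"
    proof -
      have "5/6 * (1 + eps_m) < 1/4 * real n * eps_m\<^sup>2"
        using XM eps(1) unfolding XM_def by (simp add: field_simps)
      hence "10/3 * (1 + eps_m) < real n * eps_m\<^sup>2" by (simp add: field_simps)
      hence "(10/3) * eps_m < (real n * eps_m) * eps_m" by (simp add: power2_eq_square algebra_simps)
      hence "10/3 < real n * eps_m" using eps(1) by (simp add: mult_less_cancel_right)
      thus ?thesis by simp
    qed
    have XA: "exp (- XA) < 1/18"
    proof -
      have "real n \<ge> 3" using n3 by simp
      hence "3\<^sup>2 \<le> (real n)\<^sup>2" by (intro power_mono) auto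
      hence "(real n)\<^sup>2 \<ge> 9" by simp
      hence "18 * exp (- XA) \<le> 2 * (real n)\<^sup>2 * exp (- XA)" by (intro mult_right_mono) auto
      thus ?thesis using TA1 TAe by linarith
    qed
    have dn: "eps_AP * real n \<ge> 4"
    proof (rule ccontr)
      assume "\<not> eps_AP * real n \<ge> 4"
      hence lt: "eps_AP < 4 / real n" using n0 by (simp add: field_simps)
      have "(eps_AP - 4 / real n)\<^sup>2 \<le> (4 / real n)\<^sup>2"
        using abs_le_square_iff[of "eps_AP - 4 / real n" "4 / real n"] lt eps(2) n0 by auto
      hence "1/4 * real n * (eps_AP - 4 / real n)\<^sup>2 \<le> 1/4 * real n * (4 / real n)\<^sup>2"
        using n0 by (intro mult_left_mono) auto
      also have "\<dots> = 4 / real n" using n0 by (simp add: power2_eq_square field_simps)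
      also have "\<dots> \<le> 2" using n3 n0 by (simp add: field_simps)
      finally have num2: "1/4 * real n * (eps_AP - 4 / real n)\<^sup>2 \<le> 2" .
      moreover have "XA \<le> 1/4 * real n * (eps_AP - 4 / real n)\<^sup>2" unfolding XA_def
        by (rule div_le_self1) (use eps(2) in auto)
      ultimately have "XA \<le> 2" by linarith
      hence "exp (- XA) \<ge> exp (-2)" by simp
      thus False using XA exp2 by linarith
    qed
    define eA where "eA = exp (-2 * (eps_AP / 2 * real n - 2)\<^sup>2 / real n)"
    define eM where "eM = exp (-2 * (eps_m * real n - 2)\<^sup>2 / real n)"
    define eK where "eK = exp (-2 * (real n * eps_pi - 1)\<^sup>2 / real n)"
    have eA: "4 * (real n)\<^sup>2 * eA \<le> TA"
    proof -
      define YA where "YA = 1/4 * real n * (eps_AP - 4 / real n)\<^sup>2"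
      have h3: "-2 * (eps_AP / 2 * real n - 2)\<^sup>2 / real n = - YA + - YA"
        unfolding YA_def using n0 by (simp add: power2_eq_square field_simps)
      have eAe: "eA = exp (- YA) * exp (- YA)" unfolding eA_def h3 exp_add ..
      have XAY: "XA \<le> YA" unfolding XA_def YA_def by (rule div_le_self1) (use eps(2) in auto)
      have e0: "exp (- YA) \<le> exp (- XA)" using XAY by simp
      hence e1: "exp (- YA) \<le> 1/2" using XA by linarith
      have "eA \<le> exp (- XA) * (1/2)" unfolding eAe using e1 e0 by (intro mult_mono) auto
      hence "4 * (real n)\<^sup>2 * eA \<le> 4 * (real n)\<^sup>2 * (exp (- XA) * (1/2))" by (intro mult_left_mono) auto
      thus ?thesis unfolding TAe by simp
    qed
    have eM: "eM \<le> exp (- XM)"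
    proof -
      have "XM \<le> 1/4 * real n * eps_m\<^sup>2" unfolding XM_def by (rule div_le_self1) (use eps(1) in auto)
      also have "\<dots> = (real n * eps_m)\<^sup>2 / (4 * real n)" using n0 by (simp add: power2_eq_square field_simps)
      also have "\<dots> \<le> 8 * (real n * eps_m - 2)\<^sup>2 / (4 * real n)"
        using quadM[OF nem] n0 by (intro divide_right_mono) auto
      also have "\<dots> = 2 * (eps_m * real n - 2)\<^sup>2 / real n" using n0 by (simp add: field_simps mult.commute)
      finally show ?thesis unfolding eM_def by simp
    qed
    have eK: "eK \<le> exp (- XK)"
    proof -
      have "XK \<le> 1/4 * real n * eps_pi\<^sup>2" unfolding XK_def by (rule div_le_self1) (use eps(3) in auto)
      also have "\<dots> = (real n * eps_pi)\<^sup>2 / (4 * real n)" using n0 by (simp add: power2_eq_square field_simps)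
      also have "\<dots> \<le> 8 * (real n * eps_pi - 1)\<^sup>2 / (4 * real n)"
        using quadK[of "real n * eps_pi"] nep n0 by (intro divide_right_mono) auto
      also have "\<dots> = 2 * (real n * eps_pi - 1)\<^sup>2 / real n" using n0 by (simp add: field_simps)
      finally show ?thesis unfolding eK_def by simp
    qed
    define BZ where "BZ = (\<lambda>c. {\<omega>::(nat\<Rightarrow>nat)\<times>(nat\<Rightarrow>nat\<Rightarrow>bool).
        real (card {j\<in>{1..n}. fst \<omega> j = c}) < h * (real n - 1) + 1})"
    define B1 where "B1 = (\<lambda>p. {\<omega>::(nat\<Rightarrow>nat)\<times>(nat\<Rightarrow>nat\<Rightarrow>bool).
        \<bar>\<Sum>l\<in>{1..n}. (adj (snd \<omega>) (fst p) l - gamma n * B n (fst \<omega> (fst p)) (fst \<omega> l)) * adj (snd \<omega>) (snd p) l\<bar>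
          > eps_AP / 2 * real n})"
    define B2 where "B2 = (\<lambda>p. {\<omega>::(nat\<Rightarrow>nat)\<times>(nat\<Rightarrow>nat\<Rightarrow>bool).
        \<bar>\<Sum>l\<in>{1..n}. gamma n * B n (fst \<omega> (fst p)) (fst \<omega> l) * (adj (snd \<omega>) (snd p) l - gamma n * B n (fst \<omega> (snd p)) (fst \<omega> l))\<bar>
          > eps_AP / 2 * real n})"
    define B3 where "B3 = (\<lambda>p. {\<omega>::(nat\<Rightarrow>nat)\<times>(nat\<Rightarrow>nat\<Rightarrow>bool).
        (\<Sum>l\<in>{1..n}. (adj (snd \<omega>) (fst p) l - gamma n * B n (fst \<omega> (fst p)) (fst \<omega> l))
             * (adj (snd \<omega>) (snd p) l - gamma n * B n (fst \<omega> (snd p)) (fst \<omega> l))) > eps_m * real n})"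
    define U0 where "U0 = (\<Union>c\<in>{1..K n}. BZ c)"
    define U1 where "U1 = (\<Union>p\<in>offdiag n. B1 p)"
    define U2 where "U2 = (\<Union>p\<in>{1..n}\<times>{1..n}. B2 p)"
    define U3 where "U3 = (\<Union>p\<in>offdiag n. B3 p)"
    have P01: "\<And>Z i l. 0 \<le> gamma n * B n (Z i) (Z l) \<and> gamma n * B n (Z i) (Z l) \<le> 1"
    proof -
      fix Z :: "nat \<Rightarrow> nat" and i l
      have a: "0 \<le> B n (Z i) (Z l)" "B n (Z i) (Z l) \<le> 1" using B_range by auto
      have b: "0 \<le> gamma n" "gamma n \<le> 1" using gamma_range[of n] by auto
      show "0 \<le> gamma n * B n (Z i) (Z l) \<and> gamma n * B n (Z i) (Z l) \<le> 1"
        using a b by (auto intro: mult_le_one)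
    qed
    have sub: "\<omega> \<in> U0 \<union> U1 \<union> U2 \<union> U3" if S: "\<omega> \<in> set_pmf ?S" and nG: "\<omega> \<in> UNIV - G" for \<omega>
    proof (rule ccontr)
      assume nb: "\<omega> \<notin> U0 \<union> U1 \<union> U2 \<union> U3"
      obtain Z A where om: "\<omega> = (Z, A)" by (cases \<omega>)
      have comm: "real (card {j\<in>{1..n}. Z j = Z i}) \<ge> h * (real n - 1) + 1" if i: "i \<in> {1..n}" for i
      proof -
        have "Z i \<in> set_pmf (rho n)" using supp_sbm[OF S i] om by simp
        hence "Z i \<in> {1..K n}" using rho_supp[of n] by blast
        hence "\<omega> \<notin> BZ (Z i)" using nb unfolding U0_def by auto
        thus ?thesis unfolding BZ_def om by simp
      qed
      have E1: "\<bar>\<Sum>l\<in>{1..n}. (adj A i l - gamma n * B n (Z i) (Z l)) * adj A k l\<bar> \<le> eps_AP / 2 * real n"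
        if "i \<in> {1..n}" "k \<in> {1..n}" "i \<noteq> k" for i k
      proof -
        have "(i, k) \<in> offdiag n" using that unfolding offdiag_def by auto
        hence "\<omega> \<notin> B1 (i, k)" using nb unfolding U1_def by auto
        thus ?thesis unfolding B1_def om by simp
      qed
      have E2: "\<bar>\<Sum>l\<in>{1..n}. gamma n * B n (Z x) (Z l) * (adj A k l - gamma n * B n (Z k) (Z l))\<bar> \<le> eps_AP / 2 * real n"
        if "x \<in> {1..n}" "k \<in> {1..n}" for x k
      proof -
        have "(x, k) \<in> {1..n}\<times>{1..n}" using that by auto
        hence "\<omega> \<notin> B2 (x, k)" using nb unfolding U2_def by auto
        thus ?thesis unfolding B2_def om by simp
      qed
      have E3: "(\<Sum>l\<in>{1..n}. (adj A i l - gamma n * B n (Z i) (Z l)) * (adj A k l - gamma n * B n (Z k) (Z l))) \<le> eps_m * real n"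
        if "i \<in> {1..n}" "k \<in> {1..n}" "i \<noteq> k" for i k
      proof -
        have "(i, k) \<in> offdiag n" using that unfolding offdiag_def by auto
        hence "\<omega> \<notin> B3 (i, k)" using nb unfolding U3_def by auto
        thus ?thesis unfolding B3_def om by simp
      qed
      have "\<omega> \<in> G"
      proof -
        have "1 / real n * (\<Sum>j\<in>{1..n}. (Ptilde n A h i j - gamma n * B n (Z i) (Z j))\<^sup>2)
              \<le> 1 / real (card (NS n A h i)) + eps_m + 2 / real n + 8 * eps_AP" if i: "i \<in> {1..n}" for i
        proof -
          have "1 / real n * (\<Sum>j\<in>{1..n}. (Ptilde n A h i j - gamma n * B n (Z i) (Z j))\<^sup>2)
              \<le> 1 / real (card (NS n A h i)) + eps_m + 8 * eps_AP"
            by (rule det[where P="\<lambda>i l. gamma n * B n (Z i) (Z l)" and \<delta>=eps_AP and \<epsilon>=eps_m and h=h and A=A and Z=Z and n=n,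
                  OF n3 h(1) _ _ P01[of Z] _ comm E1 E2 E3 i]) (use eps in auto)
          moreover have "2 / real n \<ge> 0" by simp
          ultimately show ?thesis by linarith
        qed
        thus ?thesis unfolding om G_def by simp
      qed
      thus False using nG by simp
    qed
    have pBAD: "measure_pmf.prob ?S (UNIV - G) \<le> measure_pmf.prob ?S (U0 \<union> U1 \<union> U2 \<union> U3)"
      by (rule prob_supp_mono) (use sub in auto)
    have Un: "\<And>X Y. measure_pmf.prob ?S (X \<union> Y) \<le> measure_pmf.prob ?S X + measure_pmf.prob ?S Y"
      by (rule measure_Un_le) auto
    have pU0: "measure_pmf.prob ?S U0 \<le> real (K n) * eK"
    proof -
      have "measure_pmf.prob ?S U0 \<le> (\<Sum>c\<in>{1..K n}. measure_pmf.prob ?S (BZ c))"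
        unfolding U0_def by (rule measure_UNION_le) auto
      also have "\<dots> \<le> (\<Sum>c\<in>{1..K n}. eK)"
      proof (intro sum_mono)
        fix c assume c: "c \<in> {1..K n}"
        have "measure_pmf.prob ?S (BZ c) = measure_pmf.prob (Pi_pmf {1..n} 0 (\<lambda>_. rho n))
               {Z. real (card {j\<in>{1..n}. Z j = c}) < h * (real n - 1) + 1}"
          unfolding BZ_def by (rule prob_sbm_Z)
        also have "\<dots> \<le> eK" unfolding eK_def
        proof (rule evZ)
          show "c \<noteq> 0" using c by auto
          show "1 \<le> n" using n3 by simp
          show "h + eps_pi \<le> pmf (rho n) c" using rmin_c[OF c] eps(4) by linarith
          show "0 < h" by (rule h(1))
          show "1 \<le> real n * eps_pi" using nep by simp
        qed
        finally show "measure_pmf.prob ?S (BZ c) \<le> eK" .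
      qed
      finally show ?thesis by simp
    qed
    have pU1: "measure_pmf.prob ?S U1 \<le> real (n * (n - 1)) * (2 * eA)"
    proof -
      have "measure_pmf.prob ?S U1 \<le> (\<Sum>p\<in>offdiag n. measure_pmf.prob ?S (B1 p))"
        unfolding U1_def by (rule measure_UNION_le) (auto simp: offdiag_finite)
      also have "\<dots> \<le> (\<Sum>p\<in>offdiag n. 2 * eA)"
      proof (intro sum_mono)
        fix p assume "p \<in> offdiag n"
        then obtain i k where p: "p = (i, k)" "i \<in> {1..n}" "k \<in> {1..n}" "i \<noteq> k" unfolding offdiag_def by auto
        show "measure_pmf.prob ?S (B1 p) \<le> 2 * eA"
        proof (rule prob_sbm_F)
          fix Z :: "nat \<Rightarrow> nat"
          have "measure_pmf.prob (Pi_pmf (offdiag n) False (\<lambda>(i, j). bernoulli_pmf (gamma n * B n (Z i) (Z j))))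
             {F. \<bar>\<Sum>l\<in>{1..n}. (adj (\<lambda>a b. F (a, b)) i l - gamma n * B n (Z i) (Z l)) * adj (\<lambda>a b. F (a, b)) k l\<bar> > eps_AP / 2 * real n}
             \<le> 2 * exp (-2 * (eps_AP / 2 * real n - 2)\<^sup>2 / n)"
            by (rule ev1[where P="\<lambda>i l. gamma n * B n (Z i) (Z l)", OF n3 P01[of Z] p(2-4)]) (use dn in simp)
          thus "measure_pmf.prob (Pi_pmf (offdiag n) False (\<lambda>(i, j). bernoulli_pmf (gamma n * B n (Z i) (Z j))))
                 {F. (Z, \<lambda>a b. F (a, b)) \<in> B1 p} \<le> 2 * eA"
            unfolding B1_def p eA_def by simp
        qed
      qed
      also have "\<dots> = real (n * (n - 1)) * (2 * eA)" by (simp add: card_offdiag)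
      finally show ?thesis .
    qed
    have pU2: "measure_pmf.prob ?S U2 \<le> real (n * n) * (2 * eA)"
    proof -
      have "measure_pmf.prob ?S U2 \<le> (\<Sum>p\<in>{1..n}\<times>{1..n}. measure_pmf.prob ?S (B2 p))"
        unfolding U2_def by (rule measure_UNION_le) auto
      also have "\<dots> \<le> (\<Sum>p\<in>{1..n}\<times>{1..n}. 2 * eA)"
      proof (intro sum_mono)
        fix p assume "p \<in> {1..n}\<times>{1..n}"
        then obtain x k where p: "p = (x, k)" "x \<in> {1..n}" "k \<in> {1..n}" by auto
        show "measure_pmf.prob ?S (B2 p) \<le> 2 * eA"
        proof (rule prob_sbm_F)
          fix Z :: "nat \<Rightarrow> nat"
          have "measure_pmf.prob (Pi_pmf (offdiag n) False (\<lambda>(i, j). bernoulli_pmf (gamma n * B n (Z i) (Z j))))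
             {F. \<bar>\<Sum>l\<in>{1..n}. gamma n * B n (Z x) (Z l) * (adj (\<lambda>a b. F (a, b)) k l - gamma n * B n (Z k) (Z l))\<bar> > eps_AP / 2 * real n}
             \<le> 2 * exp (-2 * (eps_AP / 2 * real n - 2)\<^sup>2 / n)"
            by (rule ev2[where P="\<lambda>i l. gamma n * B n (Z i) (Z l)", OF n3 P01[of Z] p(2-3)]) (use dn in simp)
          thus "measure_pmf.prob (Pi_pmf (offdiag n) False (\<lambda>(i, j). bernoulli_pmf (gamma n * B n (Z i) (Z j))))
                 {F. (Z, \<lambda>a b. F (a, b)) \<in> B2 p} \<le> 2 * eA"
            unfolding B2_def p eA_def by simp
        qed
      qed
      also have "\<dots> = real (n * n) * (2 * eA)" by simp
      finally show ?thesis .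
    qed
    have pU3: "measure_pmf.prob ?S U3 \<le> real (n * (n - 1)) * eM"
    proof -
      have "measure_pmf.prob ?S U3 \<le> (\<Sum>p\<in>offdiag n. measure_pmf.prob ?S (B3 p))"
        unfolding U3_def by (rule measure_UNION_le) (auto simp: offdiag_finite)
      also have "\<dots> \<le> (\<Sum>p\<in>offdiag n. eM)"
      proof (intro sum_mono)
        fix p assume "p \<in> offdiag n"
        then obtain i k where p: "p = (i, k)" "i \<in> {1..n}" "k \<in> {1..n}" "i \<noteq> k" unfolding offdiag_def by auto
        show "measure_pmf.prob ?S (B3 p) \<le> eM"
        proof (rule prob_sbm_F)
          fix Z :: "nat \<Rightarrow> nat"
          have "measure_pmf.prob (Pi_pmf (offdiag n) False (\<lambda>(i, j). bernoulli_pmf (gamma n * B n (Z i) (Z j))))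
             {F. (\<Sum>l\<in>{1..n}. (adj (\<lambda>a b. F (a, b)) i l - gamma n * B n (Z i) (Z l)) * (adj (\<lambda>a b. F (a, b)) k l - gamma n * B n (Z k) (Z l))) > eps_m * real n}
             \<le> exp (-2 * (eps_m * real n - 2)\<^sup>2 / n)"
            by (rule ev3[where P="\<lambda>i l. gamma n * B n (Z i) (Z l)", OF n3 P01[of Z] p(2-4)]) (use nem in \<open>simp add: mult.commute\<close>)
          thus "measure_pmf.prob (Pi_pmf (offdiag n) False (\<lambda>(i, j). bernoulli_pmf (gamma n * B n (Z i) (Z j))))
                 {F. (Z, \<lambda>a b. F (a, b)) \<in> B3 p} \<le> eM"
            unfolding B3_def p eM_def by simp
        qed
      qed
      also have "\<dots> = real (n * (n - 1)) * eM" by (simp add: card_offdiag)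
      finally show ?thesis .
    qed
    have nn1: "real (n * (n - 1)) = real n * (real n - 1)" using n3 by (simp add: of_nat_diff)
    have eA0: "eA \<ge> 0" unfolding eA_def by simp
    have A1: "real (n * (n - 1)) * (2 * eA) + real (n * n) * (2 * eA) \<le> 4 * (real n)\<^sup>2 * eA"
    proof -
      have "real (n * (n - 1)) \<le> real (n * n)" by (intro of_nat_mono mult_le_mono) auto
      hence "real (n * (n - 1)) * (2 * eA) \<le> real (n * n) * (2 * eA)" using eA0 by (intro mult_right_mono) auto
      thus ?thesis by (simp add: power2_eq_square)
    qed
    have A2: "real (n * (n - 1)) * eM \<le> TM"
      unfolding TMe nn1 using eM n3 by (intro mult_left_mono) auto
    have A0: "real (K n) * eK \<le> TK"
    proof -
      have "real (K n) * eK \<le> real (K n) * exp (- XK)" using eK by (intro mult_left_mono) auto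
      moreover have "real (K n) * exp (- XK) \<ge> 0" by simp
      moreover have "2 * real (K n) * exp (- XK) = 2 * (real (K n) * exp (- XK))" by simp
      ultimately show ?thesis unfolding TKe by linarith
    qed
    have "measure_pmf.prob ?S (UNIV - G) \<le> TK + TA + TM"
      using pBAD Un[of "U0 \<union> U1 \<union> U2" U3] Un[of "U0 \<union> U1" U2] Un[of U0 U1] pU0 pU1 pU2 pU3 A0 A1 A2 eA
      by linarith
    moreover have "measure_pmf.prob ?S (UNIV - G) = 1 - measure_pmf.prob ?S G"
      using measure_pmf.prob_compl[of G ?S] by simp
    ultimately show ?thesis unfolding goal_eq by linarith
  qed
qed


end
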